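(* Let $p$ be a prime, $R=\mathbb{F}_p[x,x^{-1}]$, $n\ge1$. Let $U$ and $U_m$ ($m\ge1$) be $R$-submodules of $R^n$ with $U\subset U_m$ and ${\rm rk}(U)={\rm rk}(U_m)$ for all $m$, and suppose $U_m\to U$. Then $U_m=U$ for all sufficiently large $m$.
   Context: The rank ${\rm rk}$ of a finitely generated $R$-module is the maximal number of elements freely generating a free submodule ($0$ if none). Convergence $U_m\to U$ of subsets of $R^n$ means that for every $v\in R^n$, the truth value of $v\in U_m$ is eventually equal to that of $v\in U$. *)

theory Defs
  imports "Berlekamp_Zassenhaus.Finite_Field" "HOL-Computational_Algebra.Formal_Laurent_Series" "HOL-Library.Function_Algebras"
begin

text \<open>The ring R = F_p[x,x^-1] of Laurent polynomials, as the subring of formal Laurent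
series (over F_p = 'p mod_ring, with CARD('p) prime) having finite support.\<close>
definition laurent_polys :: "'a::zero fls set" where
  "laurent_polys = {f. finite {k. fls_nth f k \<noteq> 0}}"

text \<open>R^n is realised as functions from a finite index type 'n (n = CARD('n) >= 1)
with all coordinates in R.\<close>
definition Rn :: "('n::finite \<Rightarrow> 'a::zero fls) set" where
  "Rn = {v. \<forall>i. v i \<in> laurent_polys}"

definition smult_vec :: "'a::times \<Rightarrow> ('n \<Rightarrow> 'a) \<Rightarrow> ('n \<Rightarrow> 'a)" where
  "smult_vec c v = (\<lambda>i. c * v i)"

definition is_submodule :: "('n::finite \<Rightarrow> 'a::comm_ring_1 fls) set \<Rightarrow> bool" where
  "is_submodule U \<longleftrightarrow> U \<subseteq> Rn \<and> 0 \<in> U \<and> (\<forall>u\<in>U. \<forall>v\<in>U. u + v \<in> U)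
     \<and> (\<forall>c\<in>laurent_polys. \<forall>u\<in>U. smult_vec c u \<in> U)"

definition R_lin_indep :: "('n::finite \<Rightarrow> 'a::comm_ring_1 fls) set \<Rightarrow> bool" where
  "R_lin_indep S \<longleftrightarrow> finite S \<and>
     (\<forall>c. (\<forall>v\<in>S. c v \<in> laurent_polys) \<longrightarrow> (\<Sum>v\<in>S. smult_vec (c v) v) = 0
        \<longrightarrow> (\<forall>v\<in>S. c v = 0))"

definition rk :: "('n::finite \<Rightarrow> 'a::comm_ring_1 fls) set \<Rightarrow> nat" where
  "rk U = Sup {card S | S. S \<subseteq> U \<and> R_lin_indep S}"

definition set_converges :: "(nat \<Rightarrow> 'b set) \<Rightarrow> 'b set \<Rightarrow> bool" where
  "set_converges Us U \<longleftrightarrow> (\<forall>v. eventually (\<lambda>m. (v \<in> Us m) = (v \<in> U)) sequentially)"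

end

theory Submission imports Defs begin
unbundle fps_syntax

lemma R_iff: "(f::'a::zero fls) \<in> laurent_polys \<longleftrightarrow> (\<exists>b. \<forall>k>b. f $$ k = 0)"
proof
  assume "f \<in> laurent_polys"
  then have fin: "finite {k. f $$ k \<noteq> 0}" by (simp add: laurent_polys_def)
  show "\<exists>b. \<forall>k>b. f $$ k = 0"
  proof (intro exI allI impI)
    fix k assume "k > Max (insert 0 {k. f $$ k \<noteq> 0})"
    then show "f $$ k = 0" using Max_ge[of "insert 0 {k. f $$ k \<noteq> 0}" k] fin by force
  qed
next
  assume "\<exists>b. \<forall>k>b. f $$ k = 0"
  then obtain b where b: "\<forall>k>b. f $$ k = 0" by blast
  have "{k. f $$ k \<noteq> 0} \<subseteq> {fls_subdegree f..b}"
    using b by (auto simp: not_less[symmetric] intro: ccontr)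
  then show "f \<in> laurent_polys" unfolding laurent_polys_def
    using finite_subset by blast
qed

lemma R_mult: "(f::'a::comm_ring_1 fls) \<in> laurent_polys \<Longrightarrow> g \<in> laurent_polys \<Longrightarrow> f * g \<in> laurent_polys"
proof -
  assume "f \<in> laurent_polys" "g \<in> laurent_polys"
  then obtain bf bg where bf: "\<forall>k>bf. f $$ k = 0" and bg: "\<forall>k>bg. g $$ k = 0" by (auto simp: R_iff)
  have "\<forall>n>bf+bg. (f*g) $$ n = 0"
  proof (intro allI impI)
    fix n assume n: "n > bf + bg"
    have "(f * g) $$ n = (\<Sum>i=fls_subdegree f..n - fls_subdegree g. f $$ i * g $$ (n - i))"
      by (rule fls_times_nth(2))
    also have "\<dots> = 0"
    proof (rule sum.neutral, rule ballI)
      fix i show "f $$ i * g $$ (n - i) = 0"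
        using bf bg n by (cases "i > bf") auto
    qed
    finally show "(f*g) $$ n = 0" .
  qed
  then show ?thesis by (auto simp: R_iff)
qed

lemma R_add: "(f::'a::ab_group_add fls) \<in> laurent_polys \<Longrightarrow> g \<in> laurent_polys \<Longrightarrow> f + g \<in> laurent_polys"
  unfolding R_iff by (metis add.right_neutral fls_plus_nth max.strict_boundedE)

lemma R_uminus: "(f::'a::ab_group_add fls) \<in> laurent_polys \<Longrightarrow> - f \<in> laurent_polys"
  unfolding R_iff by auto

lemma R_diff: "(f::'a::ab_group_add fls) \<in> laurent_polys \<Longrightarrow> g \<in> laurent_polys \<Longrightarrow> f - g \<in> laurent_polys"
  using R_add[of f "-g"] R_uminus[of g] by simp

lemma R_zero: "0 \<in> laurent_polys" by (simp add: laurent_polys_def)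
lemma R_one: "(1::'a::comm_ring_1 fls) \<in> laurent_polys"
  unfolding R_iff by (rule exI[of _ 0]) auto

lemma R_mono: "fls_shift k (fls_const (a::'a::comm_ring_1)) \<in> laurent_polys"
  unfolding R_iff by (rule exI[of _ "-k"]) auto

lemma R_sum: "(\<And>j. j \<in> J \<Longrightarrow> f j \<in> laurent_polys) \<Longrightarrow> (\<Sum>j\<in>J. f j :: 'a::ab_group_add fls) \<in> laurent_polys"
  by (induction J rule: infinite_finite_induct) (auto simp: R_zero R_add)

lemma sum_fun_apply: "(sum f A) x = (\<Sum>a\<in>A. f a x)"
  by (induction A rule: infinite_finite_induct) auto


lemma dep_exists:
  fixes g :: "'j \<Rightarrow> 'n \<Rightarrow> 'a::idom fls"
  assumes "finite I" "finite J" "\<forall>j\<in>J. \<forall>x. g j x \<in> laurent_polys"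
    "\<forall>j\<in>J. \<forall>x. x \<notin> I \<longrightarrow> g j x = 0" "card I < card J"
  shows "\<exists>c. (\<forall>j\<in>J. c j \<in> laurent_polys) \<and> (\<forall>x. (\<Sum>j\<in>J. c j * g j x) = 0) \<and> (\<exists>j\<in>J. c j \<noteq> 0)"
  using assms
proof (induction I arbitrary: J g rule: finite_induct)
  case empty
  then have "J \<noteq> {}" by auto
  then obtain j where j: "j\<in>J" by auto
  show ?case using empty j by (intro exI[of _ "\<lambda>_. 1"]) (auto simp: R_one)
next
  case (insert i I)
  show ?case
  proof (cases "\<forall>j\<in>J. g j i = 0")
    case True
    then have "\<forall>j\<in>J. \<forall>x. x \<notin> I \<longrightarrow> g j x = 0" using insert.prems(3) by (metis insertE)
    then show ?thesis using insert.IH[of J g] insert.prems insert.hyps by auto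
  next
    case False
    then obtain j0 where j0: "j0 \<in> J" "g j0 i \<noteq> 0" by auto
    define a where "a = g j0 i"
    define J' where "J' = J - {j0}"
    define g' where "g' = (\<lambda>j x. a * g j x - g j i * g j0 x)"
    have fJ': "finite J'" using insert.prems(1) by (simp add: J'_def)
    have g'R: "\<forall>j\<in>J'. \<forall>x. g' j x \<in> laurent_polys"
      using insert.prems(2) j0 by (auto simp: g'_def a_def J'_def intro!: R_diff R_mult)
    have g'sup: "\<forall>j\<in>J'. \<forall>x. x \<notin> I \<longrightarrow> g' j x = 0"
    proof (intro ballI allI impI)
      fix j x assume jx: "j \<in> J'" "x \<notin> I"
      show "g' j x = 0"
      proof (cases "x = i")
        case True then show ?thesis by (simp add: g'_def a_def mult.commute)
      next
        case False then show ?thesis using jx j0 insert.prems(3) by (auto simp: g'_def J'_def)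
      qed
    qed
    have card: "card I < card J'" using insert.prems(4) insert.hyps j0 insert.prems(1)
      by (simp add: J'_def)
    obtain c' where c': "\<forall>j\<in>J'. c' j \<in> laurent_polys" "\<forall>x. (\<Sum>j\<in>J'. c' j * g' j x) = 0"
      "\<exists>j\<in>J'. c' j \<noteq> 0"
      using insert.IH[OF fJ' g'R g'sup card] by blast
    define c where "c = (\<lambda>j. if j = j0 then - (\<Sum>j\<in>J'. c' j * g j i) else c' j * a)"
    show ?thesis
    proof (intro exI conjI)
      show "\<forall>j\<in>J. c j \<in> laurent_polys"
        using c'(1) insert.prems(2) j0
        by (auto simp: c_def J'_def a_def intro!: R_uminus R_sum R_mult)
      show "\<forall>x. (\<Sum>j\<in>J. c j * g j x) = 0"
      proof
        fix x
        have "(\<Sum>j\<in>J. c j * g j x) = c j0 * g j0 x + (\<Sum>j\<in>J'. c j * g j x)"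
          using sum.remove[OF insert.prems(1) j0(1)] J'_def by simp
        also have "(\<Sum>j\<in>J'. c j * g j x) = (\<Sum>j\<in>J'. c' j * a * g j x)"
          by (rule sum.cong) (auto simp: c_def J'_def)
        also have "c j0 * g j0 x + (\<Sum>j\<in>J'. c' j * a * g j x) = (\<Sum>j\<in>J'. c' j * g' j x)"
          unfolding c_def g'_def
          by (simp add: algebra_simps sum_distrib_left sum_distrib_right sum_subtractf)
        also have "\<dots> = 0" using c'(2) by blast
        finally show "(\<Sum>j\<in>J. c j * g j x) = 0" .
      qed
      show "\<exists>j\<in>J. c j \<noteq> 0"
        using c'(3) j0 by (auto simp: c_def J'_def a_def)
    qed
  qed
qed


lemma denom_exists:
  fixes g :: "'j \<Rightarrow> 'n \<Rightarrow> 'a::idom fls"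
  assumes "finite J" "\<forall>j\<in>J. \<forall>x. g j x \<in> laurent_polys"
  shows "\<exists>D\<in>laurent_polys. D \<noteq> 0 \<and> (\<forall>w t c. (\<forall>x. w x \<in> laurent_polys) \<longrightarrow> t \<in> laurent_polys \<longrightarrow> t \<noteq> 0
     \<longrightarrow> (\<forall>j\<in>J. c j \<in> laurent_polys) \<longrightarrow> (\<forall>x. t * w x = (\<Sum>j\<in>J. c j * g j x))
     \<longrightarrow> (\<exists>c'. (\<forall>j\<in>J. c' j \<in> laurent_polys) \<and> (\<forall>x. D * w x = (\<Sum>j\<in>J. c' j * g j x))))"
  using assms
proof (induction J arbitrary: g rule: finite_induct)
  case empty
  show ?case
  proof (intro bexI[of _ 1] conjI allI impI)
    fix w t and c :: "'j \<Rightarrow> 'a fls"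
    assume "t \<noteq> 0" "\<forall>x. t * w x = (\<Sum>j\<in>{}. c j * g j x)"
    then have "\<forall>x. w x = 0" by simp
    then show "\<exists>c'. (\<forall>j\<in>{}. c' j \<in> laurent_polys) \<and> (\<forall>x. 1 * w x = (\<Sum>j\<in>{}. c' j * g j x))"
      by simp
  qed (auto simp: R_one)
next
  case (insert j0 J)
  have gJ: "\<forall>j\<in>J. \<forall>x. g j x \<in> laurent_polys" using insert.prems by auto
  have gj0: "\<forall>x. g j0 x \<in> laurent_polys" using insert.prems by auto
  show ?case
  proof (cases "\<forall>x. g j0 x = 0")
    case True
    obtain D where D: "D \<in> laurent_polys" "D \<noteq> 0" and
      DP: "\<And>w t c. (\<forall>x. w x \<in> laurent_polys) \<Longrightarrow> t \<in> laurent_polys \<Longrightarrow> t \<noteq> 0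
     \<Longrightarrow> (\<forall>j\<in>J. c j \<in> laurent_polys) \<Longrightarrow> (\<forall>x. t * w x = (\<Sum>j\<in>J. c j * g j x))
     \<Longrightarrow> (\<exists>c'. (\<forall>j\<in>J. c' j \<in> laurent_polys) \<and> (\<forall>x. D * w x = (\<Sum>j\<in>J. c' j * g j x)))"
      using insert.IH[OF gJ] by blast
    show ?thesis
    proof (intro bexI[of _ D] conjI allI impI)
      fix w t c
      assume a: "\<forall>x. w x \<in> laurent_polys" "t \<in> laurent_polys" "t \<noteq> 0"
        "\<forall>j\<in>insert j0 J. c j \<in> laurent_polys" "\<forall>x. t * w x = (\<Sum>j\<in>insert j0 J. c j * g j x)"
      have "\<forall>x. t * w x = (\<Sum>j\<in>J. c j * g j x)" using a(5) True insert.hyps by simp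
      then obtain c' where c': "\<forall>j\<in>J. c' j \<in> laurent_polys" "\<forall>x. D * w x = (\<Sum>j\<in>J. c' j * g j x)"
        using DP[of w t c] a by auto
      show "\<exists>c'. (\<forall>j\<in>insert j0 J. c' j \<in> laurent_polys) \<and> (\<forall>x. D * w x = (\<Sum>j\<in>insert j0 J. c' j * g j x))"
        using c' True insert.hyps by (intro exI[of _ "c'(j0 := 0)"]) (auto simp: R_zero intro!: sum.cong)
    qed (use D in auto)
  next
    case False
    then obtain i where i: "g j0 i \<noteq> 0" by auto
    define a where "a = g j0 i"
    define g' where "g' = (\<lambda>j x. a * g j x - g j i * g j0 x)"
    have aR: "a \<in> laurent_polys" using gj0 by (simp add: a_def)
    have g'R: "\<forall>j\<in>J. \<forall>x. g' j x \<in> laurent_polys"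
      using gJ gj0 aR by (auto simp: g'_def intro!: R_diff R_mult)
    obtain D where D: "D \<in> laurent_polys" "D \<noteq> 0" and
      DP: "\<And>w t c. (\<forall>x. w x \<in> laurent_polys) \<Longrightarrow> t \<in> laurent_polys \<Longrightarrow> t \<noteq> 0
     \<Longrightarrow> (\<forall>j\<in>J. c j \<in> laurent_polys) \<Longrightarrow> (\<forall>x. t * w x = (\<Sum>j\<in>J. c j * g' j x))
     \<Longrightarrow> (\<exists>c'. (\<forall>j\<in>J. c' j \<in> laurent_polys) \<and> (\<forall>x. D * w x = (\<Sum>j\<in>J. c' j * g' j x)))"
      using insert.IH[OF g'R] by blast
    show ?thesis
    proof (intro bexI[of _ "D * a"] conjI allI impI)
      show "D * a \<noteq> 0" using D i a_def by simp
      show "D * a \<in> laurent_polys" using D aR by (simp add: R_mult)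
      fix w t c
      assume as: "\<forall>x. w x \<in> laurent_polys" "t \<in> laurent_polys" "t \<noteq> 0"
        "\<forall>j\<in>insert j0 J. c j \<in> laurent_polys" "\<forall>x. t * w x = (\<Sum>j\<in>insert j0 J. c j * g j x)"
      define w' where "w' = (\<lambda>x. a * w x - w i * g j0 x)"
      have w'R: "\<forall>x. w' x \<in> laurent_polys" using as(1) aR gj0 by (auto simp: w'_def intro!: R_diff R_mult)
      have tw: "\<And>x. t * w x = c j0 * g j0 x + (\<Sum>j\<in>J. c j * g j x)"
        using as(5) insert.hyps by simp
      have tw': "\<forall>x. t * w' x = (\<Sum>j\<in>J. c j * g' j x)"
      proof
        fix x
        have "t * w' x = a * (t * w x) - (t * w i) * g j0 x" by (simp add: w'_def algebra_simps)
        also have "\<dots> = a * (c j0 * g j0 x + (\<Sum>j\<in>J. c j * g j x))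
                      - (c j0 * g j0 i + (\<Sum>j\<in>J. c j * g j i)) * g j0 x"
          by (simp only: tw)
        also have "\<dots> = (\<Sum>j\<in>J. c j * g' j x)"
          unfolding g'_def a_def
          by (simp add: algebra_simps sum_distrib_left sum_distrib_right sum_subtractf)
        finally show "t * w' x = (\<Sum>j\<in>J. c j * g' j x)" .
      qed
      have cJ: "\<forall>j\<in>J. c j \<in> laurent_polys" using as(4) by auto
      obtain c'' where c'': "\<forall>j\<in>J. c'' j \<in> laurent_polys" "\<forall>x. D * w' x = (\<Sum>j\<in>J. c'' j * g' j x)"
        using DP[OF w'R as(2,3) cJ tw'] by blast
      define c' where "c' = (\<lambda>j. if j = j0 then D * w i - (\<Sum>j\<in>J. c'' j * g j i) else c'' j * a)"
      show "\<exists>c'. (\<forall>j\<in>insert j0 J. c' j \<in> laurent_polys) \<and> (\<forall>x. D * a * w x = (\<Sum>j\<in>insert j0 J. c' j * g j x))"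
      proof (intro exI conjI ballI allI)
        fix j assume "j \<in> insert j0 J"
        then show "c' j \<in> laurent_polys" using c''(1) D as(1) gJ aR
          by (auto simp: c'_def intro!: R_diff R_mult R_sum)
      next
        fix x
        have "D * a * w x = D * w' x + D * w i * g j0 x" by (simp add: w'_def algebra_simps)
        also have "\<dots> = (\<Sum>j\<in>J. c'' j * g' j x) + D * w i * g j0 x" using c''(2) by simp
        also have "\<dots> = c' j0 * g j0 x + (\<Sum>j\<in>J. c' j * g j x)"
        proof -
          have "(\<Sum>j\<in>J. c' j * g j x) = (\<Sum>j\<in>J. c'' j * a * g j x)"
            using insert.hyps by (intro sum.cong) (auto simp: c'_def)
          then show ?thesis
            unfolding g'_def c'_def
            by (simp add: algebra_simps sum_distrib_left sum_distrib_right sum_subtractf)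
        qed
        also have "\<dots> = (\<Sum>j\<in>insert j0 J. c' j * g j x)" using insert.hyps by simp
        finally show "D * a * w x = (\<Sum>j\<in>insert j0 J. c' j * g j x)" .
      qed
    qed
  qed
qed


lemma Dmono_nth: "(D * fls_shift (-k) (fls_const \<alpha>)) $$ n = D $$ (n - k) * (\<alpha>::'a::comm_ring_1)"
  by (simp add: fls_shifted_times_simps)

lemma reps_exist:
  fixes D :: "'a::{field,finite} fls"
  assumes DR: "D \<in> laurent_polys" and D0: "D \<noteq> 0"
  shows "\<exists>Q. finite Q \<and> (\<forall>c\<in>laurent_polys. \<exists>q\<in>laurent_polys. \<exists>\<rho>\<in>Q. c = D * q + \<rho>)"
proof -
  define d where "d = fls_subdegree D"
  have fin: "finite {k. D $$ k \<noteq> 0}" using DR by (simp add: laurent_polys_def)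
  have ne: "d \<in> {k. D $$ k \<noteq> 0}" using D0 by (simp add: d_def)
  define h where "h = Max {k. D $$ k \<noteq> 0}"
  have Dh: "D $$ h \<noteq> 0" unfolding h_def using Max_in[OF fin] ne by blast
  have Dd: "D $$ d \<noteq> 0" using ne by simp
  have Dabove: "\<And>k. k > h \<Longrightarrow> D $$ k = 0" unfolding h_def using Max_ge[OF fin] by force
  have Dbelow: "\<And>k. k < d \<Longrightarrow> D $$ k = 0" by (simp add: d_def)
  have dh: "d \<le> h" using Dabove Dd by (meson not_le)
  define w where "w = h - d"
  define Q where "Q = {\<rho>::'a fls. \<forall>k. \<rho> $$ k \<noteq> 0 \<longrightarrow> 0 \<le> k \<and> k < w}"
  have A: "\<forall>c b. b < w + int n \<longrightarrow> (\<forall>k. c $$ k \<noteq> 0 \<longrightarrow> 0 \<le> k \<and> k \<le> b)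
            \<longrightarrow> (\<exists>q\<in>laurent_polys. c - D * q \<in> Q)" for n :: nat
  proof (induction n)
    case 0
    show ?case
    proof (intro allI impI)
      fix c :: "'a fls" and b assume "b < w + int 0" "\<forall>k. c $$ k \<noteq> 0 \<longrightarrow> 0 \<le> k \<and> k \<le> b"
      then show "\<exists>q\<in>laurent_polys. c - D * q \<in> Q"
        by (intro bexI[of _ 0]) (auto simp: Q_def R_zero)
    qed
  next
    case (Suc n)
    show ?case
    proof (intro allI impI)
      fix c :: "'a fls" and b assume b: "b < w + int (Suc n)" and sc: "\<forall>k. c $$ k \<noteq> 0 \<longrightarrow> 0 \<le> k \<and> k \<le> b"
      show "\<exists>q\<in>laurent_polys. c - D * q \<in> Q"
      proof (cases "b < w + int n")
        case True then show ?thesis using Suc.IH sc by blast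
      next
        case False
        then have bw: "b = w + int n" using b by simp
        define \<alpha> where "\<alpha> = c $$ b / D $$ h"
        define q0 where "q0 = fls_shift (-(b - h)) (fls_const \<alpha>)"
        define c1 where "c1 = c - D * q0"
        have c1n: "c1 $$ k = c $$ k - D $$ (k - (b - h)) * \<alpha>" for k
          using Dmono_nth[of D "b - h" \<alpha> k] by (simp add: c1_def q0_def)
        have sc1: "\<forall>k. c1 $$ k \<noteq> 0 \<longrightarrow> 0 \<le> k \<and> k \<le> b - 1"
        proof (intro allI impI)
          fix k assume nz: "c1 $$ k \<noteq> 0"
          show "0 \<le> k \<and> k \<le> b - 1"
          proof (rule ccontr)
            assume "\<not> (0 \<le> k \<and> k \<le> b - 1)"
            then consider "k < 0" | "k > b" | "k = b" by linarith
            then show False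
            proof cases
              case 1
              then have "c $$ k = 0" using sc by force
              moreover have "D $$ (k - (b - h)) = 0" using 1 bw Dbelow w_def by simp
              ultimately show False using nz c1n by simp
            next
              case 2
              then have "c $$ k = 0" using sc by force
              moreover have "D $$ (k - (b - h)) = 0" using 2 Dabove by simp
              ultimately show False using nz c1n by simp
            next
              case 3
              then show False using nz c1n Dh by (simp add: \<alpha>_def)
            qed
          qed
        qed
        have "b - 1 < w + int n" using bw by simp
        then obtain q1 where q1: "q1 \<in> laurent_polys" "c1 - D * q1 \<in> Q"
          using Suc.IH sc1 by blast
        show ?thesis
        proof (intro bexI[of _ "q0 + q1"])
          show "c - D * (q0 + q1) \<in> Q" using q1(2) by (simp add: c1_def algebra_simps)
          show "q0 + q1 \<in> laurent_polys" using q1(1) by (simp add: q0_def R_add R_mono)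
        qed
      qed
    qed
  qed
  have B: "\<forall>c a b. - a \<le> int n \<longrightarrow> (\<forall>k. c $$ k \<noteq> 0 \<longrightarrow> a \<le> k \<and> k \<le> b)
            \<longrightarrow> (\<exists>q\<in>laurent_polys. c - D * q \<in> Q)" for n :: nat
  proof (induction n)
    case 0
    show ?case
    proof (intro allI impI)
      fix c :: "'a fls" and a b assume "- a \<le> int 0" "\<forall>k. c $$ k \<noteq> 0 \<longrightarrow> a \<le> k \<and> k \<le> b"
      then have sc: "\<forall>k. c $$ k \<noteq> 0 \<longrightarrow> 0 \<le> k \<and> k \<le> b" by force
      have "b < w + int (nat (b - w + 1))" by linarith
      then show "\<exists>q\<in>laurent_polys. c - D * q \<in> Q" using A sc by blast
    qed
  next
    case (Suc n)
    show ?case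
    proof (intro allI impI)
      fix c :: "'a fls" and a b assume a: "- a \<le> int (Suc n)" and sc: "\<forall>k. c $$ k \<noteq> 0 \<longrightarrow> a \<le> k \<and> k \<le> b"
      show "\<exists>q\<in>laurent_polys. c - D * q \<in> Q"
      proof (cases "- a \<le> int n")
        case True then show ?thesis using Suc.IH sc by blast
      next
        case False
        define \<alpha> where "\<alpha> = c $$ a / D $$ d"
        define q0 where "q0 = fls_shift (-(a - d)) (fls_const \<alpha>)"
        define c1 where "c1 = c - D * q0"
        have c1n: "c1 $$ k = c $$ k - D $$ (k - (a - d)) * \<alpha>" for k
          using Dmono_nth[of D "a - d" \<alpha> k] by (simp add: c1_def q0_def)
        have sc1: "\<forall>k. c1 $$ k \<noteq> 0 \<longrightarrow> a + 1 \<le> k \<and> k \<le> max b (a + w)"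
        proof (intro allI impI)
          fix k assume nz: "c1 $$ k \<noteq> 0"
          show "a + 1 \<le> k \<and> k \<le> max b (a + w)"
          proof (rule ccontr)
            assume "\<not> (a + 1 \<le> k \<and> k \<le> max b (a + w))"
            then consider "k < a" | "k > max b (a + w)" | "k = a" by linarith
            then show False
            proof cases
              case 1
              then have "c $$ k = 0" using sc by force
              moreover have "D $$ (k - (a - d)) = 0" using 1 Dbelow by simp
              ultimately show False using nz c1n by simp
            next
              case 2
              then have "c $$ k = 0" using sc by force
              moreover have "D $$ (k - (a - d)) = 0" using 2 Dabove w_def by simp
              ultimately show False using nz c1n by simp
            next
              case 3
              then show False using nz c1n Dd by (simp add: \<alpha>_def)
            qed
          qed
        qed
        have "- (a + 1) \<le> int n" using False a by linarith
        then obtain q1 where q1: "q1 \<in> laurent_polys" "c1 - D * q1 \<in> Q"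
          using Suc.IH sc1 by blast
        show ?thesis
        proof (intro bexI[of _ "q0 + q1"])
          show "c - D * (q0 + q1) \<in> Q" using q1(2) by (simp add: c1_def algebra_simps)
          show "q0 + q1 \<in> laurent_polys" using q1(1) by (simp add: q0_def R_add R_mono)
        qed
      qed
    qed
  qed
  have finQ: "finite Q"
  proof -
    define \<phi> where "\<phi> = (\<lambda>\<rho>::'a fls. restrict (\<lambda>k. \<rho> $$ k) {0..<w})"
    have "inj_on \<phi> Q"
    proof (rule inj_onI)
      fix x y assume xy: "x \<in> Q" "y \<in> Q" "\<phi> x = \<phi> y"
      show "x = y"
      proof (rule fls_eqI)
        fix k show "x $$ k = y $$ k"
        proof (cases "k \<in> {0..<w}")
          case True then show ?thesis using fun_cong[OF xy(3), of k] unfolding \<phi>_def by simp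
        next
          case False
          then have "x $$ k = 0" "y $$ k = 0" using xy(1,2) unfolding Q_def by force+
          then show ?thesis by simp
        qed
      qed
    qed
    moreover have "\<phi> ` Q \<subseteq> PiE {0..<w} (\<lambda>_. UNIV)" by (auto simp: \<phi>_def)
    moreover have "finite (PiE {0..<w} (\<lambda>_. UNIV :: 'a set))" by (rule finite_PiE) auto
    ultimately show ?thesis by (meson finite_imageD finite_subset)
  qed
  show ?thesis
  proof (intro exI conjI ballI)
    show "finite Q" by (rule finQ)
    fix c :: "'a fls" assume "c \<in> laurent_polys"
    then obtain b where b: "\<forall>k>b. c $$ k = 0" by (auto simp: R_iff)
    have "\<forall>k. c $$ k \<noteq> 0 \<longrightarrow> fls_subdegree c \<le> k \<and> k \<le> b"
      using b fls_subdegree_leI by (metis not_le)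
    moreover have "- fls_subdegree c \<le> int (nat (- fls_subdegree c))" by simp
    ultimately obtain q where "q \<in> laurent_polys" "c - D * q \<in> Q" using B by blast
    then show "\<exists>q\<in>laurent_polys. \<exists>\<rho>\<in>Q. c = D * q + \<rho>"
      by (intro bexI[of _ q] bexI[of _ "c - D * q"]) auto
  qed
qed


lemma vsum_eq0_iff: "((\<Sum>v\<in>T. smult_vec (c v) (g v)) = 0) \<longleftrightarrow> (\<forall>x. (\<Sum>v\<in>T. c v * g v x) = 0)"
  by (simp add: fun_eq_iff sum_fun_apply smult_vec_def)

lemma indep_card_bound:
  fixes T :: "('n::finite \<Rightarrow> 'a::idom fls) set"
  assumes "T \<subseteq> Rn" "R_lin_indep T"
  shows "card T \<le> CARD('n)"
proof (rule ccontr)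
  assume "\<not> card T \<le> CARD('n)"
  then have lt: "card (UNIV::'n set) < card T" by simp
  have fT: "finite T" using assms(2) by (simp add: R_lin_indep_def)
  obtain c where c: "\<forall>j\<in>T. c j \<in> laurent_polys" "\<forall>x. (\<Sum>j\<in>T. c j * j x) = 0" "\<exists>j\<in>T. c j \<noteq> 0"
    using dep_exists[of UNIV T "\<lambda>v x. v x", OF _ fT _ _ lt] assms(1)
    by (auto simp: Rn_def)
  then show False using assms(2) unfolding R_lin_indep_def vsum_eq0_iff by blast
qed

lemma rk_props:
  fixes X :: "('n::finite \<Rightarrow> 'a::idom fls) set"
  assumes "X \<subseteq> Rn"
  shows "\<exists>S. S \<subseteq> X \<and> R_lin_indep S \<and> card S = rk X"
    and "T \<subseteq> X \<Longrightarrow> R_lin_indep T \<Longrightarrow> card T \<le> rk X"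
proof -
  define K where "K = {card S | S. S \<subseteq> X \<and> R_lin_indep S}"
  have "K \<subseteq> {..CARD('n)}" using indep_card_bound assms by (auto simp: K_def)
  then have fK: "finite K" using finite_subset by blast
  have "R_lin_indep {}" by (simp add: R_lin_indep_def)
  then have "0 \<in> K" unfolding K_def by force
  then have rkK: "rk X = Max K" using fK by (auto simp: rk_def K_def[symmetric] Sup_nat_def)
  have "Max K \<in> K" using Max_in[OF fK] \<open>0 \<in> K\<close> by auto
  then obtain S where "S \<subseteq> X" "R_lin_indep S" "card S = Max K" unfolding K_def by auto
  then show "\<exists>S. S \<subseteq> X \<and> R_lin_indep S \<and> card S = rk X" using rkK by auto
  show "T \<subseteq> X \<Longrightarrow> R_lin_indep T \<Longrightarrow> card T \<le> rk X"
    using Max_ge[OF fK] rkK unfolding K_def by auto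
qed

lemma sub_diff:
  fixes U :: "('n::finite \<Rightarrow> 'a::idom fls) set"
  assumes "is_submodule U" "u \<in> U" "v \<in> U" shows "u - v \<in> U"
proof -
  have "smult_vec (-1) v \<in> U" using assms R_uminus[OF R_one] unfolding is_submodule_def by blast
  then have "u + smult_vec (-1) v \<in> U" using assms unfolding is_submodule_def by blast
  moreover have "u + smult_vec (-1) v = u - v" by (simp add: fun_eq_iff smult_vec_def)
  ultimately show ?thesis by simp
qed

lemma sub_span:
  fixes U :: "('n::finite \<Rightarrow> 'a::idom fls) set"
  assumes "is_submodule U" "finite J" "\<forall>j\<in>J. g j \<in> U" "\<forall>j\<in>J. c j \<in> laurent_polys"
  shows "(\<lambda>x. \<Sum>j\<in>J. c j * g j x) \<in> U"
  using assms(2-4)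
proof (induction J rule: finite_induct)
  case empty
  then show ?case using assms(1) by (simp add: is_submodule_def func_zero[symmetric])
next
  case (insert j0 J)
  have "(\<lambda>x. \<Sum>j\<in>insert j0 J. c j * g j x) = smult_vec (c j0) (g j0) + (\<lambda>x. \<Sum>j\<in>J. c j * g j x)"
    using insert.hyps by (simp add: fun_eq_iff smult_vec_def)
  moreover have "smult_vec (c j0) (g j0) \<in> U" using insert.prems assms(1) unfolding is_submodule_def by blast
  ultimately show ?case using insert assms(1) unfolding is_submodule_def by auto
qed


theorem lemma6p15:
  fixes U :: "('n::finite \<Rightarrow> 'p::prime_card mod_ring fls) set"
    and Us :: "nat \<Rightarrow> ('n \<Rightarrow> 'p mod_ring fls) set"
  assumes "is_submodule U"
    and "\<And>m. m \<ge> 1 \<Longrightarrow> is_submodule (Us m)"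
    and "\<And>m. m \<ge> 1 \<Longrightarrow> U \<subseteq> Us m"
    and "\<And>m. m \<ge> 1 \<Longrightarrow> rk U = rk (Us m)"
    and "set_converges Us U"
  shows "\<exists>M. \<forall>m\<ge>M. Us m = U"
proof -
  note subU = assms(1) and subUs = assms(2) and incl = assms(3) and rkeq = assms(4)
  have URn: "U \<subseteq> Rn" using subU by (simp add: is_submodule_def)
  have UsRn: "m \<ge> 1 \<Longrightarrow> Us m \<subseteq> Rn" for m using subUs by (simp add: is_submodule_def)
  obtain S0 where S0: "S0 \<subseteq> U" "R_lin_indep S0" "card S0 = rk U" using rk_props(1)[OF URn] by blast
  have fS0: "finite S0" using S0(2) by (simp add: R_lin_indep_def)
  have S0R: "\<forall>v\<in>S0. \<forall>x. v x \<in> laurent_polys" using S0(1) URn by (auto simp: Rn_def)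
  have key: "\<exists>t\<in>laurent_polys. t \<noteq> 0 \<and> (\<exists>c. (\<forall>v\<in>S0. c v \<in> laurent_polys) \<and> (\<forall>x. t * w x = (\<Sum>v\<in>S0. c v * v x)))"
    if m: "m \<ge> 1" and w: "w \<in> Us m" for m w
  proof (cases "w \<in> S0")
    case True
    show ?thesis
    proof (intro bexI[of _ 1] conjI exI[of _ "\<lambda>v. if v = w then 1 else 0"] allI ballI)
      fix x show "1 * w x = (\<Sum>v\<in>S0. (if v = w then 1 else 0) * v x)"
      proof -
        have "(\<Sum>v\<in>S0. (if v = w then 1 else 0) * v x) = (\<Sum>v\<in>S0. if v = w then w x else 0)"
          by (rule sum.cong) auto
        then show ?thesis using True fS0 by simp
      qed
    qed (auto simp: R_one R_zero)
  next
    case False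
    define T where "T = insert w S0"
    have TUs: "T \<subseteq> Us m" using S0(1) incl[OF m] w by (auto simp: T_def)
    have "card T = rk (Us m) + 1" using False fS0 S0(3) rkeq[OF m] by (simp add: T_def)
    then have "\<not> R_lin_indep T" using rk_props(2)[OF UsRn[OF m] TUs] by linarith
    moreover have fT: "finite T" using fS0 by (simp add: T_def)
    ultimately obtain c where c: "\<forall>v\<in>T. c v \<in> laurent_polys" "\<forall>x. (\<Sum>v\<in>T. c v * v x) = 0"
      "\<exists>v\<in>T. c v \<noteq> 0"
      unfolding R_lin_indep_def vsum_eq0_iff by blast
    have cT: "\<And>x. (\<Sum>v\<in>T. c v * v x) = c w * w x + (\<Sum>v\<in>S0. c v * v x)"
      using False fS0 by (simp add: T_def)
    have cw: "c w \<noteq> 0"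
    proof
      assume "c w = 0"
      then have "\<forall>x. (\<Sum>v\<in>S0. c v * v x) = 0" using c(2) cT by simp
      moreover have "\<forall>v\<in>S0. c v \<in> laurent_polys" using c(1) by (auto simp: T_def)
      ultimately have "\<forall>v\<in>S0. c v = 0" using S0(2) unfolding R_lin_indep_def vsum_eq0_iff by blast
      then show False using c(3) \<open>c w = 0\<close> by (auto simp: T_def)
    qed
    show ?thesis
    proof (intro bexI[of _ "c w"] conjI exI[of _ "\<lambda>v. - c v"] allI ballI)
      show "c w \<noteq> 0" by (rule cw)
      show "c w \<in> laurent_polys" using c(1) by (simp add: T_def)
      fix v assume "v \<in> S0" then show "- c v \<in> laurent_polys" using c(1) by (simp add: T_def R_uminus)
    next
      fix x
      have "c w * w x + (\<Sum>v\<in>S0. c v * v x) = 0" using c(2) cT by simp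
      then show "c w * w x = (\<Sum>v\<in>S0. - c v * v x)"
        by (simp add: sum_negf eq_neg_iff_add_eq_0)
    qed
  qed
  obtain D where DR: "D \<in> laurent_polys" and D0: "D \<noteq> 0" and
    DP: "\<And>w t c. (\<forall>x. w x \<in> laurent_polys) \<Longrightarrow> t \<in> laurent_polys \<Longrightarrow> t \<noteq> 0
     \<Longrightarrow> (\<forall>j\<in>S0. c j \<in> laurent_polys) \<Longrightarrow> (\<forall>x. t * w x = (\<Sum>j\<in>S0. c j * j x))
     \<Longrightarrow> (\<exists>c'. (\<forall>j\<in>S0. c' j \<in> laurent_polys) \<and> (\<forall>x. D * w x = (\<Sum>j\<in>S0. c' j * j x)))"
    using denom_exists[of S0 "\<lambda>v x. v x", OF fS0 S0R] by blast
  obtain Q where fQ: "finite Q" and Q: "\<forall>c\<in>laurent_polys. \<exists>q\<in>laurent_polys. \<exists>\<rho>\<in>Q. c = D * q + \<rho>"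
    using reps_exist[OF DR D0] by blast
  define F where "F = {f. \<exists>\<rho>\<in>PiE S0 (\<lambda>_. Q). \<forall>x. D * f x = (\<Sum>v\<in>S0. \<rho> v * v x)}"
  define G where "G = (\<lambda>\<rho>. THE f. \<forall>x. D * f x = (\<Sum>v\<in>S0. \<rho> v * v x))"
  have "F \<subseteq> G ` PiE S0 (\<lambda>_. Q)"
  proof
    fix f assume "f \<in> F"
    then obtain \<rho> where \<rho>: "\<rho> \<in> PiE S0 (\<lambda>_. Q)" "\<forall>x. D * f x = (\<Sum>v\<in>S0. \<rho> v * v x)"
      by (auto simp: F_def)
    have "G \<rho> = f" unfolding G_def
    proof (rule the_equality)
      show "\<forall>x. D * f x = (\<Sum>v\<in>S0. \<rho> v * v x)" by (rule \<rho>(2))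
      fix f' assume "\<forall>x. D * f' x = (\<Sum>v\<in>S0. \<rho> v * v x)"
      then have "\<forall>x. D * f' x = D * f x" using \<rho>(2) by simp
      then show "f' = f" using D0 by (simp add: fun_eq_iff)
    qed
    then show "f \<in> G ` PiE S0 (\<lambda>_. Q)" using \<rho>(1) by blast
  qed
  moreover have "finite (PiE S0 (\<lambda>_. Q))" using fS0 fQ by (simp add: finite_PiE)
  ultimately have fF: "finite F" using finite_subset by blast
  have FU: "\<exists>f\<in>F. w - f \<in> U" if m: "m \<ge> 1" and w: "w \<in> Us m" for m w
  proof -
    obtain t c where tc: "t \<in> laurent_polys" "t \<noteq> 0" "\<forall>v\<in>S0. c v \<in> laurent_polys"
      "\<forall>x. t * w x = (\<Sum>v\<in>S0. c v * v x)" using key[OF m w] by blast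
    have wR: "\<forall>x. w x \<in> laurent_polys" using UsRn[OF m] w by (auto simp: Rn_def)
    obtain c' where c': "\<forall>j\<in>S0. c' j \<in> laurent_polys" "\<forall>x. D * w x = (\<Sum>j\<in>S0. c' j * j x)"
      using DP[OF wR tc] by blast
    have "\<forall>v\<in>S0. \<exists>q\<in>laurent_polys. \<exists>\<rho>\<in>Q. c' v = D * q + \<rho>" using c'(1) Q by blast
    then obtain qf \<rho>f where qr: "\<forall>v\<in>S0. qf v \<in> laurent_polys \<and> \<rho>f v \<in> Q \<and> c' v = D * qf v + \<rho>f v"
      by metis
    define f where "f = (\<lambda>x. w x - (\<Sum>v\<in>S0. qf v * v x))"
    have "f \<in> F" unfolding F_def
    proof (intro CollectI bexI[of _ "restrict \<rho>f S0"] allI)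
      show "restrict \<rho>f S0 \<in> PiE S0 (\<lambda>_. Q)" using qr by auto
      fix x
      have "D * f x = D * w x - (\<Sum>v\<in>S0. D * qf v * v x)"
        by (simp add: f_def right_diff_distrib sum_distrib_left mult.assoc)
      also have "\<dots> = (\<Sum>v\<in>S0. (c' v - D * qf v) * v x)"
        using c'(2) by (simp add: left_diff_distrib sum_subtractf)
      also have "\<dots> = (\<Sum>v\<in>S0. restrict \<rho>f S0 v * v x)"
        using qr by (intro sum.cong) auto
      finally show "D * f x = (\<Sum>v\<in>S0. restrict \<rho>f S0 v * v x)" .
    qed
    moreover have "w - f = (\<lambda>x. \<Sum>v\<in>S0. qf v * v x)" by (simp add: f_def fun_eq_iff)
    moreover have "(\<lambda>x. \<Sum>v\<in>S0. qf v * v x) \<in> U"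
      using sub_span[OF subU fS0, of "\<lambda>v. v" qf] S0(1) qr by auto
    ultimately show ?thesis by metis
  qed
  have "\<forall>f\<in>F. eventually (\<lambda>m. (f \<in> Us m) = (f \<in> U)) sequentially"
    using assms(5) by (simp add: set_converges_def)
  then have "eventually (\<lambda>m. \<forall>f\<in>F. (f \<in> Us m) = (f \<in> U)) sequentially"
    using fF by (simp add: eventually_ball_finite)
  then obtain M0 where M0: "\<And>m. m \<ge> M0 \<Longrightarrow> \<forall>f\<in>F. (f \<in> Us m) = (f \<in> U)"
    by (auto simp: eventually_sequentially)
  show ?thesis
  proof (intro exI[of _ "max M0 1"] allI impI)
    fix m assume mM: "max M0 1 \<le> m"
    then have m: "m \<ge> 1" and m0: "m \<ge> M0" by auto
    show "Us m = U"
    proof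
      show "U \<subseteq> Us m" by (rule incl[OF m])
      show "Us m \<subseteq> U"
      proof
        fix w assume w: "w \<in> Us m"
        obtain f where f: "f \<in> F" "w - f \<in> U" using FU[OF m w] by blast
        have "w - (w - f) \<in> Us m" using sub_diff[OF subUs[OF m] w] f(2) incl[OF m] by blast
        then have "f \<in> Us m" by simp
        then have "f \<in> U" using M0[OF m0] f(1) by blast
        then have "f + (w - f) \<in> U" using f(2) subU unfolding is_submodule_def by blast
        then show "w \<in> U" by simp
      qed
    qed
  qed
qed

end
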